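(* Let $q$ be a prime power and $n,d$ integers with $1\leq d\leq n-1$. Then the design $\mathrm{PG}_d(n,q)$ is strongly additive under $\mathbb{Z}_{q^d}^{[n+1]_q}$, where $[m]_q=\frac{q^m-1}{q-1}$.
   Context: $\mathrm{PG}_d(n,q)$ is the design whose points are the points of the projective geometry $\mathrm{PG}(n,q)$ over $\mathbb{F}_q$ and whose blocks are the point sets of all $d$-dimensional projective subspaces; it has $[n+1]_q$ points and block size $[d+1]_q$. A subset of an abelian group $G$ is zero-sum if the sum of its elements is $0$. A design $(V,\mathscr B)$ with block size $k$ is strongly additive under $G$ if there is an injective map $f:V\to G$ such that, for every $k$-subset $S\subseteq V$, $S\in\mathscr B$ if and only if $f(S)$ is zero-sum. *)

theory Defs
  imports "HOL-Analysis.Analysis" "HOL-Algebra.Product_Groups" "HOL-Algebra.FiniteProduct"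
begin

text \<open>Projective geometry PG(n,q): the underlying vector space is \<open>'a^'n\<close> with
 \<open>'a\<close> a finite field of order q and CARD('n) = n+1.  A point is a 1-dimensional
 subspace (as a set of vectors); a d-dimensional projective subspace is a
 (d+1)-dimensional linear subspace, and the corresponding block is the set of
 points it contains.\<close>

definition PG_points :: "('a::field ^ 'n) set set" where
  "PG_points = {W. vec.subspace W \<and> vec.dim W = 1}"

definition PG_blocks :: "nat \<Rightarrow> ('a::field ^ 'n) set set set" where
  "PG_blocks d = {{P \<in> PG_points. P \<subseteq> W} | W. vec.subspace W \<and> vec.dim W = d + 1}"

definition q_number :: "nat \<Rightarrow> nat \<Rightarrow> nat" where
  "q_number q m = (q ^ m - 1) div (q - 1)"

definition zero_sum :: "('g, 'c) monoid_scheme \<Rightarrow> 'g set \<Rightarrow> bool" where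
  "zero_sum G X \<longleftrightarrow> finprod G (\<lambda>x. x) X = \<one>\<^bsub>G\<^esub>"

definition strongly_additive ::
  "('g, 'c) monoid_scheme \<Rightarrow> 'v set \<Rightarrow> 'v set set \<Rightarrow> nat \<Rightarrow> bool" where
  "strongly_additive G V B k \<longleftrightarrow>
     (\<exists>f. f \<in> V \<rightarrow> carrier G \<and> inj_on f V \<and>
          (\<forall>S. S \<subseteq> V \<and> card S = k \<longrightarrow> (S \<in> B \<longleftrightarrow> zero_sum G (f ` S))))"

definition Zmod_power :: "nat \<Rightarrow> nat \<Rightarrow> (nat \<Rightarrow> int) monoid" where
  "Zmod_power m N = product_group {..<N} (\<lambda>_. integer_mod_group m)"

end

theory Submission
  imports Defs
begin

lemma comm_monoid_Zmod_power: "comm_monoid (Zmod_power M N)"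
proof -
  have g: "group (Zmod_power M N)"
    unfolding Zmod_power_def by (rule product_group) simp
  have "comm_group (Zmod_power M N)"
  proof (rule group.group_comm_groupI[OF g])
    fix x y assume "x \<in> carrier (Zmod_power M N)" "y \<in> carrier (Zmod_power M N)"
    then show "x \<otimes>\<^bsub>Zmod_power M N\<^esub> y = y \<otimes>\<^bsub>Zmod_power M N\<^esub> x"
      unfolding Zmod_power_def by (auto simp: add.commute)
  qed
  then show ?thesis by (simp add: comm_group_def)
qed

lemma finprod_Zmod_power:
  assumes "finite A" "f \<in> A \<rightarrow> carrier (Zmod_power M N)"
  shows "finprod (Zmod_power M N) f A = (\<lambda>j\<in>{..<N}. (\<Sum>a\<in>A. f a j) mod int M)"
  using assms
proof (induction A rule: finite_induct)
  case empty
  interpret comm_monoid "Zmod_power M N" by (rule comm_monoid_Zmod_power)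
  have "finprod (Zmod_power M N) f {} = \<one>\<^bsub>Zmod_power M N\<^esub>" by simp
  then show ?case
    by (simp add: Zmod_power_def restrict_def)
next
  case (insert x F)
  interpret comm_monoid "Zmod_power M N" by (rule comm_monoid_Zmod_power)
  have "finprod (Zmod_power M N) f (insert x F) = f x \<otimes>\<^bsub>Zmod_power M N\<^esub> finprod (Zmod_power M N) f F"
    using insert by (intro finprod_insert) auto
  also have "\<dots> = (\<lambda>j\<in>{..<N}. (\<Sum>a\<in>insert x F. f a j) mod int M)"
    using insert by (auto simp: Zmod_power_def mod_add_right_eq intro!: ext)
  finally show ?case .
qed

lemma zero_sum_Zmod_power:
  assumes "finite A" "f \<in> A \<rightarrow> carrier (Zmod_power M N)" "inj_on f A"
  shows "zero_sum (Zmod_power M N) (f ` A) \<longleftrightarrow> (\<forall>j<N. int M dvd (\<Sum>a\<in>A. f a j))"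
proof -
  interpret comm_monoid "Zmod_power M N" by (rule comm_monoid_Zmod_power)
  have "finprod (Zmod_power M N) (\<lambda>x. x) (f ` A) = finprod (Zmod_power M N) f A"
    using finprod_reindex[of "\<lambda>x. x" f A] assms by auto
  also have "\<dots> = (\<lambda>j\<in>{..<N}. (\<Sum>a\<in>A. f a j) mod int M)"
    by (rule finprod_Zmod_power[OF assms(1,2)])
  finally have e: "finprod (Zmod_power M N) (\<lambda>x. x) (f ` A) = (\<lambda>j\<in>{..<N}. (\<Sum>a\<in>A. f a j) mod int M)" .
  have o: "\<one>\<^bsub>Zmod_power M N\<^esub> = (\<lambda>j\<in>{..<N}. 0)" by (simp add: Zmod_power_def)
  show ?thesis unfolding zero_sum_def e o
    by (auto simp: fun_eq_iff dvd_eq_mod_eq_0 restrict_def)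
qed


definition dot :: "'a::field ^ 'n \<Rightarrow> 'a ^ 'n \<Rightarrow> 'a" where
  "dot x y = (\<Sum>i\<in>UNIV. x$i * y$i)"

lemma dot_comm: "dot x y = dot y x"
  by (simp add: dot_def mult.commute)

lemma dot_add_left: "dot (x + z) y = dot x y + dot z y"
  by (simp add: dot_def distrib_right sum.distrib)

lemma dot_scale_left: "dot (c *s x) y = c * dot x y"
  by (simp add: dot_def sum_distrib_left mult.assoc)

lemma dot_scale_right: "dot x (c *s y) = c * dot x y"
  by (simp add: dot_def sum_distrib_left algebra_simps)

lemma dot_add_right: "dot x (y + z) = dot x y + dot x z"
  by (simp add: dot_def distrib_left sum.distrib)

lemma dot_diff_left: "dot (x - z) y = dot x y - dot z y"
  by (simp add: dot_def left_diff_distrib sum_subtractf)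

lemma dot_zero_left[simp]: "dot 0 y = 0"
  by (simp add: dot_def)

lemma dot_axis: "dot (axis i 1) y = y$i"
proof -
  have "dot (axis i 1) y = (\<Sum>j\<in>UNIV. if j = i then y$i else 0)"
    unfolding dot_def by (intro sum.cong) (auto simp: axis_def)
  then show ?thesis by simp
qed

lemma subspace_ker: "vec.subspace {x. dot x u = 0}"
  unfolding vec.subspace_def by (auto simp: dot_add_left dot_scale_left)

lemma dot_span_zero:
  assumes "\<forall>x\<in>X. dot x u = 0" "y \<in> vec.span X"
  shows "dot y u = 0"
proof -
  have "vec.span X \<subseteq> {x. dot x u = 0}"
    using assms(1) by (intro vec.span_minimal subspace_ker) auto
  then show ?thesis using assms(2) by auto
qed

lemma extension:
  fixes B :: "('a::field ^ 'n) set"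
  assumes "vec.independent B"
  shows "\<exists>u. \<forall>b\<in>B. dot b u = g b"
proof -
  interpret p: vector_space_pair "(*s) :: 'a \<Rightarrow> 'a^'n \<Rightarrow> 'a^'n" "(*) :: 'a \<Rightarrow> 'a \<Rightarrow> 'a"
    by unfold_locales
  define F where "F = p.construct B g"
  have lin: "Vector_Spaces.linear (*s) (*) F"
    unfolding F_def by (rule p.linear_construct) (use assms in simp)
  interpret F: Vector_Spaces.linear "(*s) :: 'a \<Rightarrow> 'a^'n \<Rightarrow> 'a^'n" "(*) :: 'a \<Rightarrow> 'a \<Rightarrow> 'a" F
    by (rule lin)
  define u :: "'a^'n" where "u = (\<chi> i. F (axis i 1))"
  have "dot x u = F x" for x
  proof -
    have "F x = F (\<Sum>i\<in>UNIV. x$i *s axis i 1)" by (simp add: basis_expansion)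
    also have "\<dots> = (\<Sum>i\<in>UNIV. x$i * F (axis i 1))" by (simp add: F.sum F.scale)
    also have "\<dots> = dot x u" by (simp add: dot_def u_def)
    finally show ?thesis by simp
  qed
  moreover have "b \<in> B \<Longrightarrow> F b = g b" for b
    unfolding F_def by (rule p.construct_basis) (use assms in simp_all)
  ultimately show ?thesis by (intro exI[of _ u]) auto
qed

lemma card_subspace:
  fixes V :: "('a::{field,finite} ^ 'n) set"
  assumes "vec.subspace V"
  shows "card V = CARD('a) ^ vec.dim V"
proof -
  obtain B where B: "B \<subseteq> V" "vec.independent B" "V \<subseteq> vec.span B" "card B = vec.dim V"
    using vec.basis_exists by blast
  have fin: "finite B" by simp
  have V: "V = vec.span B"
    using B assms vec.span_minimal by blast
  define F where "F = (\<lambda>c. \<Sum>v\<in>B. c v *s v)"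
  have "bij_betw F (B \<rightarrow>\<^sub>E (UNIV :: 'a set)) V"
  proof (rule bij_betw_imageI)
    show "inj_on F (B \<rightarrow>\<^sub>E UNIV)"
    proof (rule inj_onI)
      fix c c' assume c: "c \<in> B \<rightarrow>\<^sub>E UNIV" "c' \<in> B \<rightarrow>\<^sub>E UNIV" "F c = F c'"
      have "(\<Sum>v\<in>B. (c v - c' v) *s v) = 0"
        using c(3) by (simp add: F_def vec.scale_left_diff_distrib sum_subtractf)
      then have "\<forall>v\<in>B. c v - c' v = 0"
      proof -
        have "\<forall>c. (\<Sum>v\<in>B. c v *s v) = 0 \<longrightarrow> (\<forall>v\<in>B. c v = 0)"
          using B(2) vec.independent_explicit by blast
        from this[rule_format, of "\<lambda>v. c v - c' v"] show ?thesis
          using \<open>(\<Sum>v\<in>B. (c v - c' v) *s v) = 0\<close> by blast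
      qed
      then show "c = c'" by (intro PiE_ext[OF c(1) c(2)]) auto
    qed
    show "F ` (B \<rightarrow>\<^sub>E UNIV) = V"
    proof
      show "F ` (B \<rightarrow>\<^sub>E UNIV) \<subseteq> V"
        unfolding F_def using B(1)
        by (auto intro!: vec.subspace_sum[OF assms] vec.subspace_scale[OF assms])
      show "V \<subseteq> F ` (B \<rightarrow>\<^sub>E UNIV)"
      proof
        fix x assume "x \<in> V"
        then obtain c where x: "x = (\<Sum>v\<in>B. c v *s v)"
          unfolding V vec.span_finite[OF fin] by auto
        have "x = F (restrict c B)" unfolding x F_def by (intro sum.cong) auto
        then show "x \<in> F ` (B \<rightarrow>\<^sub>E UNIV)" by auto
      qed
    qed
  qed
  then have "card V = card (B \<rightarrow>\<^sub>E (UNIV :: 'a set))"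
    by (simp add: bij_betw_same_card)
  also have "\<dots> = CARD('a) ^ card B" by (simp add: card_PiE)
  finally show ?thesis using B(4) by simp
qed

lemma card_ker:
  fixes V :: "('a::{field,finite} ^ 'n) set"
  assumes "vec.subspace V" "v \<in> V" "dot v u \<noteq> 0"
  shows "card {x\<in>V. dot x u = 0} * CARD('a) = card V"
proof -
  define w where "w = inverse (dot v u) *s v"
  have w: "w \<in> V" "dot w u = 1"
    using assms by (auto simp: w_def dot_scale_left vec.subspace_def)
  let ?K = "{x\<in>V. dot x u = 0}"
  define h where "h = (\<lambda>(k::'a^'n, c::'a). k + c *s w)"
  define h' where "h' = (\<lambda>x. (x - dot x u *s w, dot x u))"
  have "bij_betw h (?K \<times> UNIV) V"
  proof (rule bij_betw_byWitness[where f'=h'])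
    show "\<forall>a\<in>?K \<times> UNIV. h' (h a) = a"
      using w by (auto simp: h_def h'_def dot_add_left dot_scale_left)
    show "\<forall>a'\<in>V. h (h' a') = a'"
      by (auto simp: h_def h'_def)
    show "h ` (?K \<times> UNIV) \<subseteq> V"
      using w assms(1) by (auto simp: h_def vec.subspace_def)
    show "h' ` V \<subseteq> ?K \<times> UNIV"
    proof
      fix y assume "y \<in> h' ` V"
      then obtain x where x: "x \<in> V" "y = h' x" by blast
      then have "x - dot x u *s w \<in> V"
        using w assms(1) vec.subspace_diff vec.subspace_scale by blast
      moreover have "dot (x - dot x u *s w) u = 0"
        using w by (simp add: dot_diff_left dot_scale_left)
      ultimately show "y \<in> ?K \<times> UNIV"
        by (simp add: h'_def x(2))
    qed
  qed
  then have "card V = card (?K \<times> (UNIV :: 'a set))"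
    by (simp add: bij_betw_same_card)
  then show ?thesis by (simp add: card_cartesian_product)
qed


definition pts :: "('a::field ^ 'n) set \<Rightarrow> ('a ^ 'n) set set" where
  "pts V = {P\<in>PG_points. P \<subseteq> V}"

lemma point_iff: "P \<in> PG_points \<longleftrightarrow> (\<exists>v. v \<noteq> 0 \<and> P = vec.span {v})"
proof
  assume "P \<in> PG_points"
  then have P: "vec.subspace P" "vec.dim P = 1" by (auto simp: PG_points_def)
  obtain B where B: "B \<subseteq> P" "vec.independent B" "P \<subseteq> vec.span B" "card B = vec.dim P"
    using vec.basis_exists by blast
  then obtain v where v: "B = {v}" using P(2) card_1_singletonE by metis
  have "v \<noteq> 0" using B(2) v vec.dependent_zero by blast
  moreover have "P = vec.span {v}"
    using B P v vec.span_minimal by blast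
  ultimately show "\<exists>v. v \<noteq> 0 \<and> P = vec.span {v}" by blast
next
  assume "\<exists>v. v \<noteq> 0 \<and> P = vec.span {v}"
  then obtain v where v: "v \<noteq> 0" "P = vec.span {v}" by blast
  have "vec.independent {v}"
    using v(1) by (simp add: vec.independent_insert)
  then have "vec.dim P = 1"
    using v(2) vec.dim_span_eq_card_independent by fastforce
  then show "P \<in> PG_points" using v(2) by (simp add: PG_points_def)
qed

lemma pointE:
  assumes "P \<in> PG_points"
  obtains v where "v \<noteq> 0" "P = vec.span {v}"
  using assms unfolding point_iff by blast

lemma pointI: "v \<noteq> 0 \<Longrightarrow> vec.span {v} \<in> PG_points"
  unfolding point_iff by blast

lemma point_subspace: "P \<in> PG_points \<Longrightarrow> vec.subspace P"
  by (simp add: PG_points_def)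

lemma point_eq:
  assumes "P \<in> PG_points" "x \<in> P" "x \<noteq> 0"
  shows "P = vec.span {x}"
proof -
  obtain v where v: "v \<noteq> 0" "P = vec.span {v}" using assms(1) by (rule pointE)
  obtain c where c: "x = c *s v" using assms(2) v(2) vec.span_singleton by blast
  have "c \<noteq> 0" using c assms(3) by auto
  have "vec.span {x} \<subseteq> P"
    using assms(2) point_subspace[OF assms(1)] vec.span_minimal by blast
  moreover have "v \<in> vec.span {x}"
  proof -
    have "v = inverse c *s x" using c \<open>c \<noteq> 0\<close> by (simp add: vector_smult_assoc)
    then show ?thesis by (metis vec.span_base vec.span_scale singletonI)
  qed
  then have "P \<subseteq> vec.span {x}"
    using v(2) vec.span_minimal by (metis empty_subsetI insert_subset vec.subspace_span)
  ultimately show ?thesis by blast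
qed

lemma card_field_ge2: "2 \<le> CARD('a::{field,finite})"
proof -
  have "card {0::'a, 1} \<le> CARD('a)" by (rule card_mono) auto
  then show ?thesis by simp
qed

lemma card_point:
  assumes "P \<in> PG_points"
  shows "card (P :: ('a::{field,finite}^'n) set) = CARD('a)"
  using card_subspace[of P] assms by (simp add: PG_points_def)

lemma card_pts_mult:
  fixes V :: "('a::{field,finite} ^ 'n) set"
  assumes "vec.subspace V"
  shows "card (pts V) * (CARD('a) - 1) = CARD('a) ^ vec.dim V - 1"
proof -
  have U: "V - {0} = (\<Union>P\<in>pts V. P - {0})"
  proof
    show "V - {0} \<subseteq> (\<Union>P\<in>pts V. P - {0})"
    proof
      fix x assume x: "x \<in> V - {0}"
      have "vec.span {x} \<subseteq> V"
        using x assms by (intro vec.span_minimal) auto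
      moreover have "vec.span {x} \<in> PG_points"
        using x point_iff[of "vec.span {x}"] by auto
      ultimately have "vec.span {x} \<in> pts V"
        unfolding pts_def by auto
      moreover have "x \<in> vec.span {x} - {0}" using x vec.span_base by auto
      ultimately show "x \<in> (\<Union>P\<in>pts V. P - {0})" by blast
    qed
    show "(\<Union>P\<in>pts V. P - {0}) \<subseteq> V - {0}" by (auto simp: pts_def)
  qed
  have fin: "finite (pts V)" by simp
  have "card (V - {0}) = (\<Sum>P\<in>pts V. card (P - {0}))"
    unfolding U
  proof (rule card_UN_disjoint[OF fin])
    show "\<forall>i\<in>pts V. finite (i - {0})" by simp
    show "\<forall>i\<in>pts V. \<forall>j\<in>pts V. i \<noteq> j \<longrightarrow> (i - {0}) \<inter> (j - {0}) = {}"
    proof (intro ballI impI)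
      fix P P' assume P: "P \<in> pts V" "P' \<in> pts V" "P \<noteq> P'"
      show "(P - {0}) \<inter> (P' - {0}) = {}"
      proof (rule ccontr)
        assume "(P - {0}) \<inter> (P' - {0}) \<noteq> {}"
        then obtain x where "x \<in> P" "x \<in> P'" "x \<noteq> 0" by blast
        then have "P = vec.span {x}" "P' = vec.span {x}"
          using P point_eq unfolding pts_def by auto
        then show False using P(3) by simp
      qed
    qed
  qed
  also have "\<dots> = (\<Sum>P\<in>pts V. CARD('a) - 1)"
  proof (rule sum.cong[OF refl])
    fix P assume "P \<in> pts V"
    then have "P \<in> PG_points" by (simp add: pts_def)
    then have "0 \<in> P" "card P = CARD('a)"
      using point_subspace vec.subspace_0 card_point by blast+
    then show "card (P - {0}) = CARD('a) - 1" by simp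
  qed
  also have "\<dots> = card (pts V) * (CARD('a) - 1)" by simp
  finally have "card (pts V) * (CARD('a) - 1) = card (V - {0})" by simp
  also have "\<dots> = card V - 1"
    using vec.subspace_0[OF assms] by (simp add: card_Diff_singleton)
  also have "\<dots> = CARD('a) ^ vec.dim V - 1"
    using card_subspace[OF assms] by simp
  finally show ?thesis .
qed

lemma card_pts:
  fixes V :: "('a::{field,finite} ^ 'n) set"
  assumes "vec.subspace V"
  shows "card (pts V) = q_number CARD('a) (vec.dim V)"
proof -
  have "CARD('a) - 1 > 0" using card_field_ge2[where 'a='a] by simp
  then show ?thesis
    using card_pts_mult[OF assms] unfolding q_number_def
    by (metis nonzero_mult_div_cancel_right less_numeral_extra(3))
qed


lemma qnum_mult:
  assumes "2 \<le> (q::nat)"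
  shows "q_number q j * (q - 1) = q ^ j - 1"
proof -
  have q1: "1 \<le> q ^ j" using assms by simp
  have "int (q ^ j - 1) = int q ^ j - 1" using q1 by (simp add: of_nat_diff)
  also have "\<dots> = (int q - 1) * (\<Sum>i<j. int q ^ i)" by (rule power_diff_1_eq)
  finally have "int (q - 1) dvd int (q ^ j - 1)" using assms by (simp add: of_nat_diff)
  then have "(q - 1) dvd (q ^ j - 1)" by simp
  then show ?thesis unfolding q_number_def by simp
qed

lemma no_span:
  "(\<exists>x\<in>P. \<exists>y\<in>vec.span {u}. dot x y \<noteq> 0) \<longleftrightarrow> \<not> P \<subseteq> {x. dot x u = 0}"
proof
  assume "\<exists>x\<in>P. \<exists>y\<in>vec.span {u}. dot x y \<noteq> 0"
  then obtain x c where "x \<in> P" "dot x (c *s u) \<noteq> 0"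
    by (auto simp: vec.span_singleton)
  then show "\<not> P \<subseteq> {x. dot x u = 0}" by (auto simp: dot_scale_right)
next
  assume "\<not> P \<subseteq> {x. dot x u = 0}"
  then show "\<exists>x\<in>P. \<exists>y\<in>vec.span {u}. dot x y \<noteq> 0"
    using vec.span_base[of u "{u}"] by auto
qed

lemma point_nonorth:
  assumes "P = vec.span {p}"
  shows "(\<not> P \<subseteq> {x. dot x u = 0}) \<longleftrightarrow> dot p u \<noteq> 0"
proof
  assume "\<not> P \<subseteq> {x. dot x u = 0}"
  then obtain x where x: "x \<in> P" "dot x u \<noteq> 0" by blast
  show "dot p u \<noteq> 0"
  proof
    assume "dot p u = 0"
    then have "\<forall>y\<in>{p}. dot y u = 0" by simp
    from dot_span_zero[OF this, of x] x assms show False by simp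
  qed
next
  assume "dot p u \<noteq> 0"
  then show "\<not> P \<subseteq> {x. dot x u = 0}"
    using assms vec.span_base[of p "{p}"] by auto
qed

lemma card_ker_UNIV:
  fixes p :: "'a::{field,finite} ^ 'n"
  assumes "p \<noteq> 0"
  shows "card {u. dot p u = 0} * CARD('a) = CARD('a) ^ CARD('n)"
proof -
  obtain i where i: "p $ i \<noteq> 0" using assms by (metis vec_eq_iff zero_index)
  have "card {x\<in>UNIV. dot x p = 0} * CARD('a) = card (UNIV :: ('a^'n) set)"
    by (rule card_ker[of UNIV "axis i 1"]) (use i in \<open>auto simp: dot_axis\<close>)
  then show ?thesis by (simp add: dot_comm)
qed

lemma pts_inter:
  "pts (W \<inter> K) = {P\<in>pts W. P \<subseteq> K}"
  by (auto simp: pts_def)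

lemma block_count:
  fixes W :: "('a::{field,finite} ^ 'n) set"
  assumes W: "vec.subspace W" "vec.dim W = d + 1"
  shows "card {P\<in>pts W. \<not> P \<subseteq> {x. dot x u = 0}} = 0 \<or>
         card {P\<in>pts W. \<not> P \<subseteq> {x. dot x u = 0}} = CARD('a) ^ d"
proof (cases "W \<subseteq> {x. dot x u = 0}")
  case True
  then have "{P\<in>pts W. \<not> P \<subseteq> {x. dot x u = 0}} = {}" by (auto simp: pts_def)
  then show ?thesis by simp
next
  case False
  let ?K = "{x. dot x u = 0}"
  let ?q = "CARD('a)"
  have q2: "2 \<le> ?q" by (rule card_field_ge2)
  obtain v where v: "v \<in> W" "dot v u \<noteq> 0" using False by auto
  have eqK: "W \<inter> ?K = {x\<in>W. dot x u = 0}" by auto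
  have sub: "vec.subspace (W \<inter> ?K)"
    using W(1) subspace_ker by (rule vec.subspace_inter)
  have "card (W \<inter> ?K) * ?q = card W"
    unfolding eqK by (rule card_ker[OF W(1) v])
  also have "\<dots> = ?q ^ (d + 1)" using card_subspace[OF W(1)] W(2) by simp
  finally have "card (W \<inter> ?K) * ?q = ?q ^ d * ?q" by simp
  then have "card (W \<inter> ?K) = ?q ^ d" using q2 by simp
  then have "?q ^ vec.dim (W \<inter> ?K) = ?q ^ d" using card_subspace[OF sub] by simp
  then have dK: "vec.dim (W \<inter> ?K) = d" using q2 by simp
  define a where "a = card (pts W)"
  define b where "b = card (pts (W \<inter> ?K))"
  have a: "a * (?q - 1) = ?q ^ (d + 1) - 1" using card_pts_mult[OF W(1)] W(2) by (simp add: a_def)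
  have b: "b * (?q - 1) = ?q ^ d - 1" using card_pts_mult[OF sub] dK by (simp add: b_def)
  have "{P\<in>pts W. \<not> P \<subseteq> ?K} = pts W - pts (W \<inter> ?K)" by (auto simp: pts_def)
  moreover have "pts (W \<inter> ?K) \<subseteq> pts W" by (auto simp: pts_def)
  ultimately have c: "card {P\<in>pts W. \<not> P \<subseteq> ?K} = a - b"
    by (simp add: a_def b_def card_Diff_subset)
  have ia: "int a * (int ?q - 1) = int ?q ^ (d + 1) - 1"
    using arg_cong[OF a, of int] q2 by (simp add: of_nat_diff)
  have ib: "int b * (int ?q - 1) = int ?q ^ d - 1"
    using arg_cong[OF b, of int] q2 by (simp add: of_nat_diff)
  have "(int a - int b) * (int ?q - 1) = int ?q ^ d * (int ?q - 1)"
    using ia ib by (simp add: algebra_simps)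
  then have "int a - int b = int ?q ^ d" using q2 by simp
  then have "int a = int (b + ?q ^ d)" by simp
  then have "a = b + ?q ^ d" by (simp only: of_nat_eq_iff)
  then show ?thesis using c by simp
qed


lemma sum_if_card: "finite A \<Longrightarrow> (\<Sum>x\<in>A. if P x then (c::nat) else 0) = c * card {x\<in>A. P x}"
  using sum.inter_filter[of A "\<lambda>_. c" P] by (simp add: mult.commute)

lemma sum_if_card_UNIV:
  "(\<Sum>x\<in>(UNIV::'a::finite set). if P x then (c::nat) else 0) = c * card {x. P x}"
  using sum_if_card[of "UNIV::'a set" P c] by simp

lemma converse:
  fixes S :: "('a::{field,finite} ^ 'n) set set"
  assumes n: "CARD('n) = n + 1" and d: "1 \<le> d" "d \<le> n - 1"
    and S: "S \<subseteq> PG_points" "card S = q_number CARD('a) (d + 1)"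
    and c: "\<And>u. card {P\<in>S. \<not> P \<subseteq> {x. dot x u = 0}} = 0 \<or>
                card {P\<in>S. \<not> P \<subseteq> {x. dot x u = 0}} = CARD('a) ^ d"
  shows "S \<in> PG_blocks d"
proof -
  let ?q = "CARD('a)"
  define k where "k = q_number ?q (d + 1)"
  define M where "M = ?q ^ d"
  define cnt where "cnt u = card {P\<in>S. \<not> P \<subseteq> {x. dot x u = 0}}" for u
  have q2: "2 \<le> ?q" by (rule card_field_ge2)
  have hk: "k * (?q - 1) = ?q ^ (d + 1) - 1" unfolding k_def by (rule qnum_mult[OF q2])
  have finS: "finite S" by (rule finite_subset[OF S(1)]) simp
  have cardU: "card (UNIV :: ('a^'n) set) = ?q ^ (n + 1)" using n by simp
  have s1: "(\<Sum>u\<in>UNIV. cnt u) = (\<Sum>P\<in>S. card {u. \<not> P \<subseteq> {x. dot x u = 0}})"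
  proof -
    have "(\<Sum>u\<in>UNIV. cnt u) = (\<Sum>u\<in>UNIV. \<Sum>P\<in>S. if \<not> P \<subseteq> {x. dot x u = 0} then 1 else 0)"
      unfolding cnt_def using finS by (simp add: sum_if_card)
    also have "\<dots> = (\<Sum>P\<in>S. \<Sum>u\<in>UNIV. if \<not> P \<subseteq> {x. dot x u = 0} then 1 else 0)"
      by (rule sum.swap)
    also have "\<dots> = (\<Sum>P\<in>S. card {u. \<not> P \<subseteq> {x. dot x u = 0}})"
      by (intro sum.cong refl) (rule trans[OF sum_if_card_UNIV mult_1])
    finally show ?thesis .
  qed
  have s2: "card {u. \<not> P \<subseteq> {x. dot x u = 0}} = ?q ^ (n + 1) - ?q ^ n" if "P \<in> S" for P
  proof -
    have "P \<in> PG_points" using that S(1) by blast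
    then obtain p where p: "p \<noteq> 0" "P = vec.span {p}" by (rule pointE)
    have e: "{u. \<not> P \<subseteq> {x. dot x u = 0}} = UNIV - {u. dot p u = 0}"
      using point_nonorth[OF p(2)] by auto
    have "card {u. dot p u = 0} * ?q = ?q ^ n * ?q"
      using card_ker_UNIV[OF p(1)] n by simp
    then have z: "card {u. dot p u = 0} = ?q ^ n" using q2 by simp
    show ?thesis unfolding e using z cardU by (simp add: card_Diff_subset)
  qed
  have s3: "(\<Sum>u\<in>UNIV. cnt u) = k * (?q ^ (n + 1) - ?q ^ n)"
    using s1 s2 S(2) by (simp add: k_def)
  define T where "T = {u. cnt u = 0}"
  have s4: "(\<Sum>u\<in>UNIV. cnt u) = M * (?q ^ (n + 1) - card T)"
  proof -
    have "(\<Sum>u\<in>UNIV. cnt u) = (\<Sum>u\<in>UNIV. if cnt u \<noteq> 0 then M else 0)"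
      using c unfolding cnt_def M_def by (intro sum.cong) auto
    also have "\<dots> = M * card {u. cnt u \<noteq> 0}"
      by (rule sum_if_card_UNIV)
    also have "{u. cnt u \<noteq> 0} = UNIV - T" by (auto simp: T_def)
    also have "card (UNIV - T) = ?q ^ (n + 1) - card T"
      using cardU by (simp add: card_Diff_subset)
    finally show ?thesis .
  qed
  have tle: "card T \<le> ?q ^ (n + 1)" using cardU card_mono[of UNIV T] by simp
  have nd: "n = d + (n - d)" using d by simp
  have cardT: "card T = ?q ^ (n - d)"
  proof -
    define Q where "Q = int ?q"
    define t where "t = int (card T)"
    have Q1: "Q \<ge> 2" using q2 by (simp add: Q_def)
    have ik: "int k * (Q - 1) = Q ^ (d + 1) - 1"
      using arg_cong[OF hk, of int] q2 by (simp add: of_nat_diff Q_def)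
    have "int k * (Q ^ (n + 1) - Q ^ n) = Q ^ d * (Q ^ (n + 1) - t)"
      using arg_cong[OF trans[OF s3[symmetric] s4], of int] tle q2
      by (simp add: of_nat_diff Q_def t_def M_def)
    moreover have "int k * (Q ^ (n + 1) - Q ^ n) = (int k * (Q - 1)) * Q ^ n"
      by (simp add: algebra_simps)
    ultimately have "(Q ^ (d + 1) - 1) * Q ^ n = Q ^ d * (Q ^ (n + 1) - t)"
      using ik by simp
    then have "Q ^ d * t = Q ^ n"
      by (simp add: algebra_simps power_add)
    also have "Q ^ n = Q ^ d * Q ^ (n - d)"
      by (subst nd) (simp add: power_add)
    finally have "t = Q ^ (n - d)" using Q1 by simp
    then show ?thesis by (simp add: t_def Q_def)
  qed
  define W where "W = vec.span (\<Union>S)"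
  have subW: "vec.subspace W" by (simp add: W_def)
  obtain B where B: "B \<subseteq> W" "vec.independent B" "W \<subseteq> vec.span B" "card B = vec.dim W"
    using vec.basis_exists by blast
  define m where "m = vec.dim W"
  have Tdot: "dot b t = 0" if "t \<in> T" "b \<in> B" for t b
  proof -
    have "cnt t = 0" using that by (simp add: T_def)
    then have "{P\<in>S. \<not> P \<subseteq> {x. dot x t = 0}} = {}" using finS by (simp add: cnt_def)
    then have hz: "\<forall>x\<in>\<Union>S. dot x t = 0" by auto
    have "b \<in> vec.span (\<Union>S)" using B(1) that(2) W_def by auto
    then show ?thesis by (rule dot_span_zero[OF hz])
  qed
  define Ug where "Ug g = (SOME u. \<forall>b\<in>B. dot b u = g b)" for g :: "'a^'n \<Rightarrow> 'a"
  have Ug: "dot b (Ug g) = g b" if "b \<in> B" for g b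
  proof -
    have "\<exists>u. \<forall>b\<in>B. dot b u = g b" by (rule extension[OF B(2)])
    from someI_ex[OF this] have "\<forall>b\<in>B. dot b (Ug g) = g b" unfolding Ug_def .
    then show ?thesis using that by blast
  qed
  define h where "h = (\<lambda>(t, g). t + Ug g)"
  have "inj_on h (T \<times> (B \<rightarrow>\<^sub>E (UNIV :: 'a set)))"
  proof (rule inj_onI, clarify)
    fix t g t' g'
    assume a: "t \<in> T" "g \<in> B \<rightarrow>\<^sub>E UNIV" "t' \<in> T" "g' \<in> B \<rightarrow>\<^sub>E UNIV" "h (t, g) = h (t', g')"
    have "g b = g' b" if "b \<in> B" for b
    proof -
      have "dot b (h (t, g)) = g b"
        using Tdot[OF a(1) that] Ug[OF that] by (simp add: h_def dot_add_right)
      moreover have "dot b (h (t', g')) = g' b"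
        using Tdot[OF a(3) that] Ug[OF that] by (simp add: h_def dot_add_right)
      ultimately show ?thesis using a(5) by simp
    qed
    then have "g = g'" by (intro PiE_ext[OF a(2) a(4)])
    then show "t = t' \<and> g = g'" using a(5) by (simp add: h_def)
  qed
  then have "card (T \<times> (B \<rightarrow>\<^sub>E (UNIV :: 'a set))) \<le> card (UNIV :: ('a^'n) set)"
    by (rule card_inj_on_le) auto
  moreover have "card (T \<times> (B \<rightarrow>\<^sub>E (UNIV :: 'a set))) = ?q ^ (n - d) * ?q ^ m"
    using cardT B(4) by (simp add: card_cartesian_product card_PiE m_def)
  ultimately have "?q ^ (n - d + m) \<le> ?q ^ (n + 1)"
    using cardU by (simp add: power_add)
  then have "n - d + m \<le> n + 1" using q2 by (intro power_le_imp_le_exp) auto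
  then have m1: "m \<le> d + 1" using d by simp
  have SW: "S \<subseteq> pts W"
    using S(1) vec.span_superset[of "\<Union>S"] unfolding pts_def W_def by auto
  then have "card S \<le> card (pts W)" by (intro card_mono) auto
  then have "k * (?q - 1) \<le> card (pts W) * (?q - 1)"
    using S(2) by (simp add: k_def)
  then have "?q ^ (d + 1) - 1 \<le> ?q ^ m - 1"
    unfolding hk card_pts_mult[OF subW] m_def .
  moreover have "1 \<le> ?q ^ m" using q2 by simp
  moreover have "1 \<le> ?q ^ (d + 1)" using q2 by simp
  ultimately have "?q ^ (d + 1) \<le> ?q ^ m" by arith
  then have "d + 1 \<le> m" using q2 by (intro power_le_imp_le_exp) auto
  with m1 have m: "m = d + 1" by simp
  have "card (pts W) = k" using card_pts[OF subW] m by (simp add: m_def k_def)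
  then have "S = pts W"
    using SW S(2) by (intro card_subset_eq) (auto simp: k_def)
  then have SW': "S = {P \<in> PG_points. P \<subseteq> W}" by (simp add: pts_def)
  have dW: "vec.dim W = d + 1" using m m_def by simp
  show ?thesis
    unfolding PG_blocks_def mem_Collect_eq
    by (rule exI[of _ W]) (use SW' subW dW in simp)
qed


lemma dot_zero_right[simp]: "dot x 0 = 0"
  by (simp add: dot_def)

theorem theorem4p1:
  fixes n d :: nat
  assumes "CARD('n::finite) = n + 1"
    and "1 \<le> d" and "d \<le> n - 1"
  shows "strongly_additive
           (Zmod_power (CARD('a::{field,finite}) ^ d) (q_number CARD('a) (n + 1)))
           (PG_points :: ('a ^ 'n) set set)
           (PG_blocks d)
           (q_number CARD('a) (d + 1))"
proof -
  let ?q = "CARD('a)"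
  define M where "M = ?q ^ d"
  define N where "N = q_number ?q (n + 1)"
  define k where "k = q_number ?q (d + 1)"
  have q2: "2 \<le> ?q" by (rule card_field_ge2)
  obtain d' where d': "d = Suc d'" using assms(2) by (cases d) auto
  have M2: "2 \<le> M"
  proof -
    have "1 \<le> ?q ^ d'" using q2 by simp
    then have "2 * 1 \<le> ?q * ?q ^ d'" using q2 by (intro mult_le_mono) auto
    then show ?thesis by (simp add: M_def d')
  qed
  have dimU: "vec.dim (UNIV :: ('a^'n) set) = n + 1"
    using vec_dim_card assms(1) by metis
  have ptsU: "pts (UNIV :: ('a^'n) set) = PG_points" by (simp add: pts_def)
  have cardP: "card (PG_points :: ('a^'n) set set) = N"
  proof -
    have "card (pts (UNIV :: ('a^'n) set)) = q_number ?q (vec.dim (UNIV :: ('a^'n) set))"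
      by (rule card_pts) simp
    then show ?thesis using ptsU dimU by (simp add: N_def)
  qed
  obtain idx where bij: "bij_betw idx (PG_points :: ('a^'n) set set) {..<N}"
    using finite_same_card_bij[of "PG_points :: ('a^'n) set set" "{..<N}"] cardP by auto
  define ix where "ix j = inv_into (PG_points :: ('a^'n) set set) idx j" for j
  have ix: "ix j \<in> PG_points" "idx (ix j) = j" if "j < N" for j
  proof -
    have "j \<in> idx ` PG_points" using bij that by (simp add: bij_betw_def)
    then show "ix j \<in> PG_points" "idx (ix j) = j"
      unfolding ix_def by (auto intro: inv_into_into f_inv_into_f)
  qed
  have ixQ: "ix (idx Q) = Q" "idx Q < N" if "Q \<in> PG_points" for Q
  proof -
    show "ix (idx Q) = Q" using bij that unfolding ix_def by (simp add: bij_betw_inv_into_left)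
    have "idx Q \<in> {..<N}" using bij_betwE[OF bij] that by blast
    then show "idx Q < N" by simp
  qed
  define no where "no P Q = (\<exists>x\<in>P. \<exists>y\<in>Q. dot x y \<noteq> 0)" for P Q :: "('a^'n) set"
  define f where "f P = (\<lambda>j\<in>{..<N}. if no P (ix j) then (1::int) else 0)" for P
  have carr: "f \<in> PG_points \<rightarrow> carrier (Zmod_power M N)"
    using M2 by (auto simp: f_def Zmod_power_def carrier_integer_mod_group)
  have inj: "inj_on f PG_points"
  proof (rule inj_onI, rule ccontr)
    fix P P' assume a: "P \<in> PG_points" "P' \<in> PG_points" "f P = f P'" "P \<noteq> P'"
    obtain p where p: "p \<noteq> 0" "P = vec.span {p}" using a(1) by (rule pointE)
    obtain p' where p': "p' \<noteq> 0" "P' = vec.span {p'}" using a(2) by (rule pointE)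
    have np: "p' \<notin> vec.span {p}"
    proof
      assume "p' \<in> vec.span {p}"
      then have "P = vec.span {p'}" using point_eq[OF a(1)] p p' by simp
      then show False using a(4) p' by simp
    qed
    have "vec.independent {p}" using p(1) by (simp add: vec.independent_insert)
    then have ind: "vec.independent {p', p}" using np by (rule vec.independent_insertI[rotated])
    have pp: "p' \<noteq> p" using np vec.span_base[of p "{p}"] by auto
    obtain u where u: "\<forall>b\<in>{p', p}. dot b u = (if b = p then 0 else 1)"
      using extension[OF ind, where g = "\<lambda>b. if b = p then 0 else 1"] by blast
    have u1: "dot p u = 0" "dot p' u = 1" using u pp by auto
    then have "u \<noteq> 0" by auto
    then have Q: "vec.span {u} \<in> PG_points" by (rule pointI)
    define j where "j = idx (vec.span {u})"
    have j: "j < N" "ix j = vec.span {u}" using ixQ[OF Q] by (auto simp: j_def)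
    have "\<not> no P (ix j)"
      unfolding j(2) no_def no_span using point_nonorth[OF p(2)] u1 by simp
    moreover have "no P' (ix j)"
      unfolding j(2) no_def no_span using point_nonorth[OF p'(2)] u1 by simp
    ultimately have "f P j \<noteq> f P' j" using j by (simp add: f_def)
    then show False using a(3) by simp
  qed
  have sumf: "(\<Sum>P\<in>S. f P j) = int (card {P\<in>S. no P (ix j)})" if "j < N" "finite S" for S j
  proof -
    have "(\<Sum>P\<in>S. f P j) = (\<Sum>P\<in>S. int (if no P (ix j) then 1 else 0))"
      using that by (intro sum.cong) (auto simp: f_def)
    also have "\<dots> = int (\<Sum>P\<in>S. if no P (ix j) then 1 else 0)" by simp
    also have "\<dots> = int (card {P\<in>S. no P (ix j)})" using that(2) by (simp add: sum_if_card)
    finally show ?thesis .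
  qed
  have zs: "zero_sum (Zmod_power M N) (f ` S) \<longleftrightarrow>
            (\<forall>u. M dvd card {P\<in>S. \<not> P \<subseteq> {x. dot x u = 0}})"
    if S: "S \<subseteq> PG_points" for S
  proof -
    have finS: "finite S" by (rule finite_subset[OF S]) simp
    have "zero_sum (Zmod_power M N) (f ` S) \<longleftrightarrow> (\<forall>j<N. int M dvd (\<Sum>P\<in>S. f P j))"
    proof -
      have "f \<in> S \<rightarrow> carrier (Zmod_power M N)" using carr S by auto
      moreover have "inj_on f S" using inj_on_subset[OF inj S] .
      ultimately show ?thesis using zero_sum_Zmod_power[OF finS] by blast
    qed
    also have "\<dots> \<longleftrightarrow> (\<forall>j<N. M dvd card {P\<in>S. no P (ix j)})"
      using sumf finS by simp
    also have "\<dots> \<longleftrightarrow> (\<forall>u. M dvd card {P\<in>S. \<not> P \<subseteq> {x. dot x u = 0}})"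
    proof
      assume h: "\<forall>j<N. M dvd card {P\<in>S. no P (ix j)}"
      show "\<forall>u. M dvd card {P\<in>S. \<not> P \<subseteq> {x. dot x u = 0}}"
      proof
        fix u :: "'a^'n"
        show "M dvd card {P\<in>S. \<not> P \<subseteq> {x. dot x u = 0}}"
        proof (cases "u = 0")
          case True
          then show ?thesis by simp
        next
          case False
          then have Q: "vec.span {u} \<in> PG_points" by (rule pointI)
          have "{P\<in>S. no P (ix (idx (vec.span {u})))} = {P\<in>S. \<not> P \<subseteq> {x. dot x u = 0}}"
            using ixQ(1)[OF Q] by (simp add: no_def no_span)
          moreover have "M dvd card {P\<in>S. no P (ix (idx (vec.span {u})))}"
            using h ixQ(2)[OF Q] by blast
          ultimately show ?thesis by simp
        qed
      qed
    next
      assume h: "\<forall>u. M dvd card {P\<in>S. \<not> P \<subseteq> {x. dot x u = 0}}"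
      show "\<forall>j<N. M dvd card {P\<in>S. no P (ix j)}"
      proof (intro allI impI)
        fix j assume "j < N"
        then have "ix j \<in> PG_points" by (rule ix(1))
        then obtain v where v: "ix j = vec.span {v}" by (rule pointE)
        have "{P\<in>S. no P (ix j)} = {P\<in>S. \<not> P \<subseteq> {x. dot x v = 0}}"
          using v by (simp add: no_def no_span)
        then show "M dvd card {P\<in>S. no P (ix j)}" using h by simp
      qed
    qed
    finally show ?thesis .
  qed
  have hk: "k * (?q - 1) = ?q ^ (d + 1) - 1" unfolding k_def by (rule qnum_mult[OF q2])
  have k2M: "k < 2 * M"
  proof -
    define Q where "Q = int ?q"
    have Q2: "Q \<ge> 2" using q2 by (simp add: Q_def)
    have ik: "int k * (Q - 1) = Q ^ (d + 1) - 1"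
      using arg_cong[OF hk, of int] q2 by (simp add: of_nat_diff Q_def)
    have "2 * Q ^ d \<le> Q * Q ^ d" using Q2 by (intro mult_right_mono) auto
    then have "int k * (Q - 1) < (2 * Q ^ d) * (Q - 1)"
      using ik by (simp add: algebra_simps)
    then have "int k < 2 * Q ^ d" using Q2 by (simp add: mult_less_cancel_right)
    then have "int k < int (2 * ?q ^ d)" by (simp add: Q_def)
    then show ?thesis unfolding M_def by (simp only: of_nat_less_iff)
  qed
  show ?thesis
    unfolding strongly_additive_def
  proof (intro exI[of _ f] conjI allI impI)
    show "f \<in> PG_points \<rightarrow> carrier (Zmod_power (?q ^ d) (q_number ?q (n + 1)))"
      using carr by (simp add: M_def N_def)
    show "inj_on f PG_points" by (rule inj)
    fix S :: "('a^'n) set set" assume S: "S \<subseteq> PG_points \<and> card S = q_number ?q (d + 1)"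
    have zs': "zero_sum (Zmod_power (?q ^ d) (q_number ?q (n + 1))) (f ` S) \<longleftrightarrow>
            (\<forall>u. M dvd card {P\<in>S. \<not> P \<subseteq> {x. dot x u = 0}})"
      using zs[of S] S by (simp add: M_def N_def)
    show "S \<in> PG_blocks d \<longleftrightarrow> zero_sum (Zmod_power (?q ^ d) (q_number ?q (n + 1))) (f ` S)"
      unfolding zs'
    proof
      assume "S \<in> PG_blocks d"
      then obtain W where W: "vec.subspace W" "vec.dim W = d + 1" "S = pts W"
        unfolding PG_blocks_def pts_def by blast
      show "\<forall>u. M dvd card {P\<in>S. \<not> P \<subseteq> {x. dot x u = 0}}"
      proof
        fix u
        have "card {P\<in>S. \<not> P \<subseteq> {x. dot x u = 0}} = 0 \<or>
              card {P\<in>S. \<not> P \<subseteq> {x. dot x u = 0}} = ?q ^ d"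
          using block_count[OF W(1,2), of u] W(3) by simp
        then show "M dvd card {P\<in>S. \<not> P \<subseteq> {x. dot x u = 0}}"
          unfolding M_def by (elim disjE) (simp only: dvd_0_right dvd_refl)+
      qed
    next
      assume h: "\<forall>u. M dvd card {P\<in>S. \<not> P \<subseteq> {x. dot x u = 0}}"
      have finS: "finite S" by (rule finite_subset[of S UNIV]) auto
      have c: "card {P\<in>S. \<not> P \<subseteq> {x. dot x u = 0}} = 0 \<or>
               card {P\<in>S. \<not> P \<subseteq> {x. dot x u = 0}} = ?q ^ d" for u
      proof -
        obtain r where r: "card {P\<in>S. \<not> P \<subseteq> {x. dot x u = 0}} = M * r"
          using h by (meson dvdE)
        have "card {P\<in>S. \<not> P \<subseteq> {x. dot x u = 0}} \<le> card S"
          using finS by (intro card_mono) auto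
        then have le: "M * r \<le> k" using S r by (simp add: k_def)
        have "M * r < M * 2" using le k2M by linarith
        then have "r < 2" using M2 by simp
        then have "r = 0 \<or> r = 1" by auto
        then show ?thesis using r by (auto simp: M_def)
      qed
      show "S \<in> PG_blocks d"
        by (rule converse[OF assms(1,2,3)]) (use S c in auto)
    qed
  qed
qed

end
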